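(* Let $q,d\geq 2$ be integers. Suppose that for every $\mathbf{s}\in(\mathbb{Z}/d\mathbb{Z})^5$ the density $\delta(q,d;\mathbf{s})$ exists, and let $\boldsymbol{\delta}$ be the column vector $(\delta(q,d;\mathbf{s}))_{\mathbf{s}\in(\mathbb{Z}/d\mathbb{Z})^5}$. Then $P(q,d)\boldsymbol{\delta}=\boldsymbol{\delta}$ (i.e., $\boldsymbol{\delta}$ is a right eigenvector of $P(q,d)$ with eigenvalue $1$), and all entries of $\boldsymbol{\delta}$ are rational numbers.
   Context: For an integer $q\geq 2$ and $n\in\mathbb{N}$: $v_q(0)=0$ and, for $n>0$, $v_q(n)=\max\{k: q^k\mid n\}$; $w_q(n)=\sum_{i=0}^n v_q(i)$; $u_q(n)=\sum_{i=0}^n w_q(i)$. For $\mathbf{s}=(\theta_u,\theta_w,\theta_2,\theta_1,\theta_0)$ with entries in $\mathbb{Z}$ (or in $\mathbb{Z}/d\mathbb{Z}$, which is equivalent since only residues mod $d$ matter), $\gamma(A,q,d;\mathbf{s})$ is the number of $n\in\mathbb{N}$, $n<A$, with $\theta_u u_q(n)+\theta_w w_q(n)+\theta_2\frac{n(n+1)}{2}+\theta_1 n+\theta_0\equiv 0\pmod d$, and $\delta(q,d;\mathbf{s})=\lim_{N\to\infty}\gamma(N,q,d;\mathbf{s})/N$ when this limit exists. For $\lambda\in\{0,\ldots,q-1\}$ let $M_\lambda$ be the $5\times5$ matrix, reduced modulo $d$, $$M_\lambda=\begin{pmatrix} q & \lambda-q+1 & q & \lambda-q+1 & 0\\ 0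 & 1 & 0 & 1 & 0\\ 0 & 0 & q^2 & \lambda q-\frac{q(q-1)}{2} & \frac{\lambda(\lambda+1)}{2}\\ 0 & 0 & 0 & q & \lambda\\ 0 & 0 & 0 & 0 & 1 \end{pmatrix}.$$ For $\mathbf{s},\mathbf{t}\in(\mathbb{Z}/d\mathbb{Z})^5$ (row vectors), let $\mu(\mathbf{s},\mathbf{t})$ be the number of $\lambda\in\{0,\ldots,q-1\}$ with $\mathbf{t}=\mathbf{s}M_\lambda$. Then $P(q,d)$ is the $d^5\times d^5$ matrix indexed by $(\mathbb{Z}/d\mathbb{Z})^5$ with $(\mathbf{s},\mathbf{t})$-entry $\mu(\mathbf{s},\mathbf{t})/q$. *)

theory Defs
  imports Complex_Main
begin

definition vq :: "nat \<Rightarrow> nat \<Rightarrow> nat" where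
  "vq q n = (if n = 0 then 0 else Max {k. q ^ k dvd n})"

definition wq :: "nat \<Rightarrow> nat \<Rightarrow> nat" where
  "wq q n = (\<Sum>i\<le>n. vq q i)"

definition uq :: "nat \<Rightarrow> nat \<Rightarrow> nat" where
  "uq q n = (\<Sum>i\<le>n. wq q i)"

text \<open>Parameter vectors s = (theta_u, theta_w, theta_2, theta_1, theta_0), as int lists of length 5
  (index 0 = theta_u, ..., index 4 = theta_0).\<close>
definition gamma :: "nat \<Rightarrow> nat \<Rightarrow> nat \<Rightarrow> int list \<Rightarrow> nat" where
  "gamma A q d s = card {n. n < A \<and>
     (s!0 * int (uq q n) + s!1 * int (wq q n) + s!2 * int (n * (n + 1) div 2)
       + s!3 * int n + s!4) mod int d = 0}"

definition delta :: "nat \<Rightarrow> nat \<Rightarrow> int list \<Rightarrow> real" where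
  "delta q d s = lim (\<lambda>N. real (gamma N q d s) / real N)"

definition delta_exists :: "nat \<Rightarrow> nat \<Rightarrow> int list \<Rightarrow> bool" where
  "delta_exists q d s = convergent (\<lambda>N. real (gamma N q d s) / real N)"

text \<open>(Z/dZ)^5, represented by residue lists of length 5 with entries in {0..d-1}.\<close>
definition residues5 :: "nat \<Rightarrow> int list set" where
  "residues5 d = {s. length s = 5 \<and> (\<forall>i<5. 0 \<le> s!i \<and> s!i < int d)}"

definition Mmat :: "nat \<Rightarrow> nat \<Rightarrow> nat \<Rightarrow> nat \<Rightarrow> int" where
  "Mmat q lam i j =
    (let q' = int q; l = int lam in
     [[q', l - q' + 1, q', l - q' + 1, 0],
      [0, 1, 0, 1, 0],
      [0, 0, q'^2, l * q' - q' * (q' - 1) div 2, l * (l + 1) div 2],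
      [0, 0, 0, q', l],
      [0, 0, 0, 0, 1]] ! i ! j)"

definition vecmat :: "nat \<Rightarrow> nat \<Rightarrow> nat \<Rightarrow> int list \<Rightarrow> int list" where
  "vecmat q d lam s = map (\<lambda>j. (\<Sum>i<5. s!i * Mmat q lam i j) mod int d) [0..<5]"

definition mu :: "nat \<Rightarrow> nat \<Rightarrow> int list \<Rightarrow> int list \<Rightarrow> nat" where
  "mu q d s t = card {lam. lam < q \<and> t = vecmat q d lam s}"

definition Pmat :: "nat \<Rightarrow> nat \<Rightarrow> int list \<Rightarrow> int list \<Rightarrow> real" where
  "Pmat q d s t = real (mu q d s t) / real q"

end

theory Submission
  imports Defs
begin


lemma vq_fin: fixes q n :: nat assumes "q \<ge> 2" "n > 0" shows "finite {k. q ^ k dvd n}"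
proof -
  have "{k. q ^ k dvd n} \<subseteq> {..n}"
  proof
    fix k assume "k \<in> {k. q ^ k dvd n}"
    hence a: "q ^ k \<le> n" using assms by (auto intro: dvd_imp_le)
    have b: "k < 2 ^ k" by (rule less_exp)
    have c: "2 ^ k \<le> q ^ k" using assms by (simp add: power_mono)
    from a b c have "k \<le> n" by linarith
    thus "k \<in> {..n}" by simp
  qed
  thus ?thesis by (rule finite_subset) simp
qed

lemma vq_char: assumes "q \<ge> 2" "n > 0" "q ^ k dvd n" "\<not> q ^ Suc k dvd n"
  shows "vq q n = k"
proof -
  have "Max {k. q ^ k dvd n} = k"
  proof (rule Max_eqI)
    show "finite {k. q ^ k dvd n}" using vq_fin assms by blast
    fix y assume "y \<in> {k. q ^ k dvd n}"
    hence y: "q ^ y dvd n" by simp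
    show "y \<le> k"
    proof (rule ccontr)
      assume "\<not> y \<le> k"
      hence "Suc k \<le> y" by simp
      hence "q ^ Suc k dvd q ^ y" by (rule le_imp_power_dvd)
      with y assms show False using dvd_trans by blast
    qed
  qed (use assms in simp)
  thus ?thesis using assms by (simp add: vq_def)
qed

lemma vq_props: assumes "q \<ge> 2" "n > 0"
  shows "q ^ vq q n dvd n" "\<not> q ^ Suc (vq q n) dvd n"
proof -
  have f: "finite {k. q ^ k dvd n}" using vq_fin assms by blast
  have ne: "0 \<in> {k. q ^ k dvd n}" by simp
  have vd: "vq q n = Max {k. q ^ k dvd n}" using assms by (simp add: vq_def)
  have "Max {k. q ^ k dvd n} \<in> {k. q ^ k dvd n}" using Max_in[OF f] ne by blast
  hence "vq q n \<in> {k. q ^ k dvd n}" using vd by simp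
  thus "q ^ vq q n dvd n" by simp
  show "\<not> q ^ Suc (vq q n) dvd n"
  proof
    assume "q ^ Suc (vq q n) dvd n"
    hence "Suc (vq q n) \<le> vq q n" using Max_ge[OF f] assms by (auto simp: vq_def)
    thus False by simp
  qed
qed

lemma vq_nd: assumes "q \<ge> 2" "\<not> q dvd n" shows "vq q n = 0"
proof -
  have "n > 0" using assms by (cases n) auto
  thus ?thesis using vq_char[of q n 0] assms by simp
qed

lemma vq_mult: assumes "q \<ge> 2" "j > 0" shows "vq q (q * j) = Suc (vq q j)"
proof -
  have a: "q ^ vq q j dvd j" "\<not> q ^ Suc (vq q j) dvd j" using vq_props assms by auto
  have qp: "q > 0" using assms by simp
  show ?thesis
  proof (rule vq_char)
    show "q ^ Suc (vq q j) dvd q * j" using a qp by simp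
    show "\<not> q ^ Suc (Suc (vq q j)) dvd q * j" using a qp by simp
  qed (use assms in auto)
qed

lemma vq0: "vq q 0 = 0" by (simp add: vq_def)
lemma wq0: "wq q 0 = 0" by (simp add: wq_def vq0)
lemma uq0: "uq q 0 = 0" by (simp add: uq_def wq0)
lemma wq_Suc: "wq q (Suc n) = wq q n + vq q (Suc n)" by (simp add: wq_def)
lemma uq_Suc: "uq q (Suc n) = uq q n + wq q (Suc n)" by (simp add: uq_def)

lemma w_block: assumes "q \<ge> 2" "l < q" shows "wq q (q*m+l) = wq q (q*m)"
  using assms(2)
proof (induction l)
  case (Suc l)
  have "\<not> q dvd (q*m + Suc l)"
  proof
    assume "q dvd (q*m + Suc l)"
    hence "q dvd Suc l" by (metis dvd_add_right_iff dvd_triv_left)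
    with Suc.prems show False by (auto dest: dvd_imp_le)
  qed
  hence "vq q (Suc (q*m+l)) = 0" using vq_nd assms by simp
  thus ?case using Suc by (simp add: wq_Suc)
qed simp

lemma w_mult: assumes "q \<ge> 2" shows "wq q (q*m) = wq q m + m"
proof (induction m)
  case 0 thus ?case by (simp add: wq0)
next
  case (Suc m)
  have e: "q * Suc m = Suc (q*m + (q - 1))" using assms by simp
  have "wq q (q * Suc m) = wq q (q*m + (q-1)) + vq q (q * Suc m)"
    by (simp only: e wq_Suc)
  also have "\<dots> = wq q m + m + Suc (vq q (Suc m))"
    using w_block[OF assms, of "q-1" m] vq_mult[OF assms, of "Suc m"] Suc assms by simp
  finally show ?case by (simp add: wq_Suc)
qed

lemma w_id: assumes "q \<ge> 2" "l < q" shows "wq q (q*m+l) = wq q m + m"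
  using w_block[OF assms] w_mult[OF assms(1)] by simp

lemma u_lam: assumes "q \<ge> 2" "l < q" shows "uq q (q*m+l) = uq q (q*m) + l * (wq q m + m)"
  using assms(2)
proof (induction l)
  case (Suc l)
  have "uq q (q*m + Suc l) = uq q (q*m+l) + wq q (q*m + Suc l)"
    by (simp add: uq_Suc)
  also have "wq q (q*m + Suc l) = wq q m + m" using w_id[OF assms(1) Suc.prems] .
  finally show ?case using Suc by simp
qed simp

lemma u_mult: assumes "q \<ge> 2"
  shows "2 * int (uq q (q*m)) = 2 * int q * int (uq q m) + 2 * (1 - int q) * int (wq q m)
          + int q * int m * (int m + 1) + 2 * (1 - int q) * int m"
proof (induction m)
  case 0 thus ?case by (simp add: uq0 wq0)
next
  case (Suc m)
  have e: "q * Suc m = Suc (q*m + (q - 1))" using assms by simp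
  have "uq q (q * Suc m) = uq q (q*m + (q-1)) + wq q (q * Suc m)"
    by (simp only: e uq_Suc)
  also have "\<dots> = uq q (q*m) + (q-1) * (wq q m + m) + wq q (Suc m) + Suc m"
    using u_lam[OF assms, of "q-1" m] w_mult[OF assms, of "Suc m"] assms by simp
  finally have A: "uq q (q * Suc m) = uq q (q*m) + (q-1) * (wq q m + m) + wq q (Suc m) + Suc m" .
  have B: "uq q (Suc m) = uq q m + wq q (Suc m)" by (rule uq_Suc)
  have qq: "int (q - 1) = int q - 1" using assms by simp
  have A': "int (uq q (q * Suc m)) = int (uq q (q*m)) + (int q - 1) * (int (wq q m) + int m) + int (wq q (Suc m)) + int m + 1"
    by (simp only: A of_nat_add of_nat_mult qq)
  show ?case using Suc.IH unfolding A' B of_nat_add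
    by (simp add: algebra_simps)
qed

lemma u_id: assumes "q \<ge> 2" "l < q"
  shows "2 * int (uq q (q*m+l)) = 2 * int q * int (uq q m) + 2 * (int l + 1 - int q) * int (wq q m)
          + int q * int m * (int m + 1) + 2 * (int l + 1 - int q) * int m"
proof -
  have A: "int (uq q (q*m+l)) = int (uq q (q*m)) + int l * (int (wq q m) + int m)"
    using u_lam[OF assms, of m] by simp
  have B: "2 * int (uq q (q*m)) = 2 * int q * int (uq q m) + 2 * (1 - int q) * int (wq q m)
          + int q * int m * (int m + 1) + 2 * (1 - int q) * int m" by (rule u_mult[OF assms(1)])
  show ?thesis unfolding A using B by (simp add: ring_distribs)
qed



lemma vecmat_expl: "vecmat q d l s = [ (s!0 * int q) mod int d,
   (s!0 * (int l - int q + 1) + s!1) mod int d,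
   (s!0 * int q + s!2 * int q^2) mod int d,
   (s!0 * (int l - int q + 1) + s!1 + s!2 * (int l * int q - int q * (int q - 1) div 2) + s!3 * int q) mod int d,
   (s!2 * (int l * (int l + 1) div 2) + s!3 * int l + s!4) mod int d]"
  by (simp add: vecmat_def Mmat_def numeral_eq_Suc lessThan_Suc upt_rec Let_def power2_eq_square ac_simps)

lemma two_T: "2 * int (n*(n+1) div 2) = int n * (int n + 1)"
proof -
  have "even (n*(n+1))" by simp
  hence "2 * (n*(n+1) div 2) = n*(n+1)" by simp
  have "2 * int (n*(n+1) div 2) = int (2 * (n*(n+1) div 2))" by (simp only: of_nat_mult of_nat_numeral)
  also have "\<dots> = int (n*(n+1))" using \<open>2 * (n*(n+1) div 2) = n*(n+1)\<close> by simp
  also have "\<dots> = int n * (int n + 1)" by (simp only: of_nat_mult of_nat_add of_nat_1)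
  finally show ?thesis .
qed

lemma two_Ti: "2 * ((x::int)*(x+1) div 2) = x * (x + 1)"
proof -
  have "even (x*(x+1))" by simp
  thus ?thesis by simp
qed

lemma T_id: "int ((q*m+l)*(q*m+l+1) div 2) = int q^2 * int (m*(m+1) div 2)
   + (int l * int q - int q*(int q - 1) div 2)*int m + int l*(int l+1) div 2"
proof -
  have a: "2 * int ((q*m+l)*(q*m+l+1) div 2) = int (q*m+l) * (int (q*m+l) + 1)" by (rule two_T)
  have b: "2 * int (m*(m+1) div 2) = int m * (int m + 1)" by (rule two_T)
  have c: "2 * (int l*(int l+1) div 2) = int l * (int l + 1)" by (rule two_Ti)
  have c2: "2 * ((int q - 1)*((int q - 1)+1) div 2) = (int q - 1) * ((int q - 1) + 1)" by (rule two_Ti)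
  have c3: "int q*(int q - 1) = (int q - 1)*((int q - 1)+1)" by (simp add: algebra_simps)
  have c4: "2 * (int q*(int q - 1) div 2) = int q*(int q - 1)" using c2 c3 by simp
  have "2 * int ((q*m+l)*(q*m+l+1) div 2) = 2 * (int q^2 * int (m*(m+1) div 2)
   + (int l * int q - int q*(int q - 1) div 2)*int m + int l*(int l+1) div 2)"
  proof -
    have "2 * (int q^2 * int (m*(m+1) div 2)
     + (int l * int q - int q*(int q - 1) div 2)*int m + int l*(int l+1) div 2)
     = int q^2 * (2 * int (m*(m+1) div 2)) + (2 * int l * int q - 2 * (int q*(int q - 1) div 2))*int m
       + 2 * (int l*(int l+1) div 2)" by (simp add: algebra_simps)
    also have "\<dots> = int q^2 * (int m * (int m + 1)) + (2 * int l * int q - int q*(int q - 1))*int m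
       + int l * (int l + 1)" using b c c4 by simp
    also have "\<dots> = int (q*m+l) * (int (q*m+l) + 1)" by (simp add: algebra_simps power2_eq_square)
    finally show ?thesis using a by simp
  qed
  thus ?thesis by simp
qed

lemma U_id: assumes "q \<ge> 2" "l < q"
  shows "int (uq q (q*m+l)) = int q * int (uq q m) + (int l + 1 - int q) * int (wq q m)
          + int q * int (m*(m+1) div 2) + (int l + 1 - int q) * int m"
proof -
  have "2 * int (uq q (q*m+l)) = 2 * (int q * int (uq q m) + (int l + 1 - int q) * int (wq q m)
          + int q * int (m*(m+1) div 2) + (int l + 1 - int q) * int m)"
    using u_id[OF assms, of m] two_T[of m] by (simp add: algebra_simps)
  thus ?thesis by simp
qed

definition ex :: "nat \<Rightarrow> int list \<Rightarrow> nat \<Rightarrow> int" where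
  "ex q s n = s!0 * int (uq q n) + s!1 * int (wq q n) + s!2 * int (n * (n + 1) div 2)
       + s!3 * int n + s!4"

lemma gamma_ex: "gamma A q d s = card {n. n < A \<and> ex q s n mod int d = 0}"
  by (simp add: gamma_def ex_def)

lemma key: assumes "q \<ge> 2" "l < q"
  shows "ex q s (q*m+l) mod int d = ex q (vecmat q d l s) m mod int d"
proof -
  define U W T where "U = int (uq q m)" and "W = int (wq q m)" and "T = int (m*(m+1) div 2)"
  define a0 a1 a2 a3 a4 where "a0 = s!0 * int q"
    and "a1 = s!0 * (int l - int q + 1) + s!1"
    and "a2 = s!0 * int q + s!2 * int q^2"
    and "a3 = s!0 * (int l - int q + 1) + s!1 + s!2 * (int l * int q - int q * (int q - 1) div 2) + s!3 * int q"
    and "a4 = s!2 * (int l * (int l + 1) div 2) + s!3 * int l + s!4"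
  have E: "ex q s (q*m+l) = a0*U + a1*W + a2*T + a3*int m + a4"
    unfolding ex_def U_id[OF assms] T_id a0_def a1_def a2_def a3_def a4_def U_def W_def T_def
    using w_id[OF assms, of m] by (simp add: algebra_simps)
  have F: "ex q (vecmat q d l s) m = (a0 mod int d)*U + (a1 mod int d)*W + (a2 mod int d)*T
     + (a3 mod int d)*int m + a4 mod int d"
    unfolding ex_def vecmat_expl a0_def a1_def a2_def a3_def a4_def U_def W_def T_def
    by simp
  show ?thesis unfolding E F by (intro mod_add_cong mod_mult_cong) simp_all
qed

lemma count: assumes "q \<ge> 2"
  shows "gamma (q*N) q d s = (\<Sum>l<q. gamma N q d (vecmat q d l s))"
proof -
  define P where "P = (\<lambda>s n. ex q s n mod int d = 0)"
  have eq: "{n. n < q*N \<and> P s n} = (\<Union>l<q. (\<lambda>m. q*m+l) ` {m. m < N \<and> P (vecmat q d l s) m})"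
  proof (rule set_eqI, rule iffI)
    fix n assume n: "n \<in> {n. n < q*N \<and> P s n}"
    define m l where "m = n div q" and "l = n mod q"
    have nl: "n = q*m+l" unfolding m_def l_def by simp
    have lq: "l < q" using assms unfolding l_def by simp
    have "m < N" using n unfolding m_def by (simp add: less_mult_imp_div_less mult.commute)
    moreover have "P (vecmat q d l s) m" using n key[OF assms lq, of s m] nl unfolding P_def by simp
    ultimately show "n \<in> (\<Union>l<q. (\<lambda>m. q*m+l) ` {m. m < N \<and> P (vecmat q d l s) m})"
      using nl lq by blast
  next
    fix n assume "n \<in> (\<Union>l<q. (\<lambda>m. q*m+l) ` {m. m < N \<and> P (vecmat q d l s) m})"
    then obtain l m where lq: "l < q" and m: "m < N" "P (vecmat q d l s) m" and nl: "n = q*m+l" by blast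
    have "q*m + l < q*m + q" using lq by simp
    also have "\<dots> = q * Suc m" by simp
    also have "\<dots> \<le> q * N" using m by (intro mult_le_mono2) simp
    finally have "n < q*N" using nl by simp
    moreover have "P s n" using m key[OF assms lq, of s m] nl unfolding P_def by simp
    ultimately show "n \<in> {n. n < q*N \<and> P s n}" by simp
  qed
  have "gamma (q*N) q d s = card {n. n < q*N \<and> P s n}"
    unfolding gamma_ex P_def by simp
  also have "\<dots> = card (\<Union>l<q. (\<lambda>m. q*m+l) ` {m. m < N \<and> P (vecmat q d l s) m})"
    unfolding eq ..
  also have "\<dots> = (\<Sum>l<q. card ((\<lambda>m. q*m+l) ` {m. m < N \<and> P (vecmat q d l s) m}))"
  proof (rule card_UN_disjoint)
    show "\<forall>i\<in>{..<q}. \<forall>j\<in>{..<q}. i \<noteq> j \<longrightarrow>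
      (\<lambda>m. q*m+i) ` {m. m < N \<and> P (vecmat q d i s) m} \<inter> (\<lambda>m. q*m+j) ` {m. m < N \<and> P (vecmat q d j s) m} = {}"
    proof (intro ballI impI)
      fix i j assume ij: "i \<in> {..<q}" "j \<in> {..<q}" "i \<noteq> j"
      show "(\<lambda>m. q*m+i) ` {m. m < N \<and> P (vecmat q d i s) m} \<inter> (\<lambda>m. q*m+j) ` {m. m < N \<and> P (vecmat q d j s) m} = {}"
      proof (rule ccontr)
        assume "\<not> ?thesis"
        then obtain a b where "q*a+i = q*b+j" by blast
        hence "(q*a+i) mod q = (q*b+j) mod q" by simp
        thus False using ij by simp
      qed
    qed
  qed auto
  also have "\<dots> = (\<Sum>l<q. gamma N q d (vecmat q d l s))"
  proof (rule sum.cong)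
    fix l assume "l \<in> {..<q}"
    have "inj (\<lambda>m. q*m+l)" using assms by (intro injI) simp
    hence "card ((\<lambda>m. q*m+l) ` {m. m < N \<and> P (vecmat q d l s) m}) = card {m. m < N \<and> P (vecmat q d l s) m}"
      by (simp add: card_image inj_on_subset)
    thus "card ((\<lambda>m. q*m+l) ` {m. m < N \<and> P (vecmat q d l s) m}) = gamma N q d (vecmat q d l s)"
      unfolding gamma_ex P_def .
  qed simp
  finally show ?thesis .
qed



lemma dep:
  fixes R :: "'a set" and v :: "'b \<Rightarrow> 'a \<Rightarrow> real"
  assumes "finite R"
  shows "finite I \<Longrightarrow> card R < card I \<Longrightarrow> (\<forall>i\<in>I. \<forall>x\<in>R. v i x \<in> \<rat>) \<Longrightarrow>
    \<exists>c. (\<forall>i\<in>I. c i \<in> \<rat>) \<and> (\<exists>i\<in>I. c i \<noteq> 0) \<and> (\<forall>x\<in>R. (\<Sum>i\<in>I. c i * v i x) = 0)"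
  using assms
proof (induction R arbitrary: I v rule: finite_induct)
  case empty
  then obtain i0 where "i0 \<in> I" by fastforce
  thus ?case by (intro exI[of _ "\<lambda>_. 1"]) auto
next
  case (insert r R)
  show ?case
  proof (cases "\<forall>i\<in>I. v i r = 0")
    case True
    have "card R < card I" using insert by simp
    then obtain c where c: "\<forall>i\<in>I. c i \<in> \<rat>" "\<exists>i\<in>I. c i \<noteq> 0" "\<forall>x\<in>R. (\<Sum>i\<in>I. c i * v i x) = 0"
      using insert.IH[of I v] insert.prems by auto
    show ?thesis using c True by (intro exI[of _ c]) auto
  next
    case False
    then obtain j where j: "j \<in> I" "v j r \<noteq> 0" by blast
    define I' where "I' = I - {j}"
    define w where "w = (\<lambda>i x. v i x - v i r / v j r * v j x)"
    have fI': "finite I'" using insert.prems unfolding I'_def by simp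
    have cI': "card R < card I'" using insert.prems insert.hyps j unfolding I'_def by simp
    have wr: "\<forall>i\<in>I'. \<forall>x\<in>R. w i x \<in> \<rat>"
      using insert.prems j unfolding w_def I'_def by auto
    obtain c' where c': "\<forall>i\<in>I'. c' i \<in> \<rat>" "\<exists>i\<in>I'. c' i \<noteq> 0" "\<forall>x\<in>R. (\<Sum>i\<in>I'. c' i * w i x) = 0"
      using insert.IH[OF fI' cI' wr] by blast
    define c where "c = (\<lambda>i. if i = j then - (\<Sum>i\<in>I'. c' i * v i r) / v j r else c' i)"
    have Ieq: "I = insert j I'" using j unfolding I'_def by auto
    have jI': "j \<notin> I'" unfolding I'_def by simp
    have sum_eq: "(\<Sum>i\<in>I. c i * v i x) = (\<Sum>i\<in>I'. c' i * w i x)" for x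
    proof -
      have "(\<Sum>i\<in>I. c i * v i x) = c j * v j x + (\<Sum>i\<in>I'. c i * v i x)"
        unfolding Ieq using fI' jI' by simp
      also have "(\<Sum>i\<in>I'. c i * v i x) = (\<Sum>i\<in>I'. c' i * v i x)"
        using jI' unfolding c_def by (intro sum.cong) auto
      also have "(\<Sum>i\<in>I'. c' i * w i x) = (\<Sum>i\<in>I'. c' i * v i x) - (\<Sum>i\<in>I'. c' i * v i r) / v j r * v j x"
        unfolding w_def by (simp add: algebra_simps sum_subtractf sum_distrib_left sum_divide_distrib sum_distrib_right)
      ultimately show ?thesis unfolding c_def by simp
    qed
    have "\<forall>i\<in>I. c i \<in> \<rat>"
      using c'(1) insert.prems j unfolding c_def I'_def by (auto intro!: Rats_divide Rats_sum Rats_mult)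
    moreover have "\<exists>i\<in>I. c i \<noteq> 0" using c'(2) jI' unfolding c_def Ieq by auto
    moreover have "\<forall>x\<in>insert r R. (\<Sum>i\<in>I. c i * v i x) = 0"
      unfolding sum_eq using c'(3) j(2) by (auto simp: w_def)
    ultimately show ?thesis by blast
  qed
qed



lemma sbp: fixes c y :: "nat \<Rightarrow> real"
  shows "(\<Sum>j<n. (\<Sum>i\<in>{j<..n}. c i) * (y (Suc j) - y j)) = (\<Sum>i\<le>n. c i * y i) - (\<Sum>i\<le>n. c i) * y 0"
proof (induction n)
  case 0 thus ?case by simp
next
  case (Suc n)
  have split: "(\<Sum>i\<in>{j<..Suc n}. c i) = (\<Sum>i\<in>{j<..n}. c i) + c (Suc n)" if "j < Suc n" for j
  proof -
    have "{j<..Suc n} = insert (Suc n) {j<..n}" using that by auto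
    thus ?thesis by simp
  qed
  have "(\<Sum>j<Suc n. (\<Sum>i\<in>{j<..Suc n}. c i) * (y (Suc j) - y j))
      = (\<Sum>j<Suc n. (\<Sum>i\<in>{j<..n}. c i) * (y (Suc j) - y j) + c (Suc n) * (y (Suc j) - y j))"
    by (intro sum.cong) (simp_all add: split algebra_simps)
  also have "\<dots> = (\<Sum>j<n. (\<Sum>i\<in>{j<..n}. c i) * (y (Suc j) - y j)) + c (Suc n) * (\<Sum>j<Suc n. (y (Suc j) - y j))"
    by (simp only: sum.distrib sum_distrib_left) (simp add: sum.lessThan_Suc)
  also have "(\<Sum>j<Suc n. (y (Suc j) - y j)) = y (Suc n) - y 0" by (rule sum_lessThan_telescope)
  finally show ?case using Suc.IH by (simp add: algebra_simps)
qed

lemma shift_lim: fixes x c :: "nat \<Rightarrow> real"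
  assumes "x \<longlonglongrightarrow> L"
  shows "(\<lambda>k. \<Sum>i\<le>n. c i * x (k+i)) \<longlonglongrightarrow> (\<Sum>i\<le>n. c i) * L"
proof -
  have "(\<lambda>k. \<Sum>i\<le>n. c i * x (k+i)) \<longlonglongrightarrow> (\<Sum>i\<le>n. c i * L)"
    by (intro tendsto_intros LIMSEQ_ignore_initial_segment assms)
  thus ?thesis by (simp add: sum_distrib_right)
qed

lemma lim_rat: "\<forall>(c::nat\<Rightarrow>real) (x::nat\<Rightarrow>real) L. (\<forall>i. c i \<in> \<rat>) \<longrightarrow> (\<exists>i\<le>n. c i \<noteq> 0) \<longrightarrow> (\<forall>k. x k \<in> \<rat>)
   \<longrightarrow> x \<longlonglongrightarrow> L \<longrightarrow> (\<forall>k. (\<Sum>i\<le>n. c i * x (k+i)) = 0) \<longrightarrow> L \<in> \<rat>"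
proof (induction n)
  case 0
  show ?case
  proof (intro allI impI)
    fix c x L assume A: "\<forall>i. (c::nat\<Rightarrow>real) i \<in> \<rat>" "\<exists>i\<le>0. c i \<noteq> 0" "\<forall>k. (x::nat\<Rightarrow>real) k \<in> \<rat>"
      "x \<longlonglongrightarrow> L" "\<forall>k. (\<Sum>i\<le>0. c i * x (k+i)) = 0"
    have "(\<lambda>k. \<Sum>i\<le>0. c i * x (k+i)) \<longlonglongrightarrow> (\<Sum>i\<le>0. c i) * L" by (rule shift_lim[OF A(4)])
    moreover have "(\<lambda>k. \<Sum>i\<le>0. c i * x (k+i)) = (\<lambda>k. 0)" by (intro ext) (rule A(5)[rule_format])
    ultimately have "(\<lambda>k. 0::real) \<longlonglongrightarrow> c 0 * L" by simp
    hence "c 0 * L = 0" using LIMSEQ_unique tendsto_const by blast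
    thus "L \<in> \<rat>" using A(2) by simp
  qed
next
  case (Suc m)
  show ?case
  proof (intro allI impI)
    fix c x L assume A: "\<forall>i. (c::nat\<Rightarrow>real) i \<in> \<rat>" "\<exists>i\<le>Suc m. c i \<noteq> 0" "\<forall>k. (x::nat\<Rightarrow>real) k \<in> \<rat>"
      "x \<longlonglongrightarrow> L" "\<forall>k. (\<Sum>i\<le>Suc m. c i * x (k+i)) = 0"
    define S where "S = (\<Sum>i\<le>Suc m. c i)"
    have lim1: "(\<lambda>k. \<Sum>i\<le>Suc m. c i * x (k+i)) \<longlonglongrightarrow> S * L" unfolding S_def by (rule shift_lim[OF A(4)])
    hence "(\<lambda>k. 0::real) \<longlonglongrightarrow> S * L" using A(5) by simp
    hence SL: "S * L = 0" using LIMSEQ_unique tendsto_const by blast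
    show "L \<in> \<rat>"
    proof (cases "S = 0")
      case False thus ?thesis using SL by simp
    next
      case S0: True
      define d where "d = (\<lambda>j. \<Sum>i\<in>{j<..Suc m}. c i)"
      define b where "b = (\<lambda>k. \<Sum>j\<le>m. d j * x (k+j))"
      have bstep: "b (Suc k) = b k" for k
      proof -
        have "b (Suc k) - b k = (\<Sum>j<Suc m. d j * (x (k + Suc j) - x (k + j)))"
          unfolding b_def by (simp add: lessThan_Suc_atMost sum_subtractf[symmetric] algebra_simps)
        also have "\<dots> = (\<Sum>i\<le>Suc m. c i * x (k+i)) - S * x (k+0)"
          unfolding d_def S_def using sbp[where c=c and y="\<lambda>i. x (k+i)" and n="Suc m"] by simp
        also have "\<dots> = 0" using A(5) S0 by simp
        finally show ?thesis by simp
      qed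
      have bconst: "b k = b 0" for k by (induction k) (simp_all add: bstep)
      have "b \<longlonglongrightarrow> (\<Sum>j\<le>m. d j) * L" unfolding b_def by (rule shift_lim[OF A(4)])
      moreover have "b = (\<lambda>k. b 0)" by (rule ext) (rule bconst)
      ultimately have "(\<lambda>k. b 0) \<longlonglongrightarrow> (\<Sum>j\<le>m. d j) * L" by simp
      hence b0: "b 0 = (\<Sum>j\<le>m. d j) * L" using LIMSEQ_unique tendsto_const by blast
      have dR: "\<forall>j. d j \<in> \<rat>" unfolding d_def using A(1) by auto
      have b0R: "b 0 \<in> \<rat>" unfolding b_def using dR A(3) by auto
      show ?thesis
      proof (cases "(\<Sum>j\<le>m. d j) = 0")
        case False
        hence "L = b 0 / (\<Sum>j\<le>m. d j)" using b0 by simp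
        moreover have "(\<Sum>j\<le>m. d j) \<in> \<rat>" using dR by (intro Rats_sum) auto
        ultimately show ?thesis using b0R by simp
      next
        case True
        hence bz: "\<forall>k. (\<Sum>j\<le>m. d j * x (k+j)) = 0" using b0 bconst unfolding b_def by simp
        have dnz: "\<exists>j\<le>m. d j \<noteq> 0"
        proof (rule ccontr)
          assume "\<not> ?thesis"
          hence dz: "\<forall>j\<le>m. d j = 0" by simp
          have dsplit: "d j = c (Suc j) + (if j < m then d (Suc j) else 0)" if "j \<le> m" for j
          proof -
            have "{j<..Suc m} = insert (Suc j) {Suc j<..Suc m}" using that by auto
            hence "d j = c (Suc j) + (\<Sum>i\<in>{Suc j<..Suc m}. c i)" unfolding d_def by simp
            moreover have "j = m \<Longrightarrow> {Suc j<..Suc m} = {}" by auto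
            ultimately show ?thesis unfolding d_def by auto
          qed
          have "\<forall>i\<le>Suc m. c i = 0"
          proof (intro allI impI)
            fix i assume i: "i \<le> Suc m"
            show "c i = 0"
            proof (cases i)
              case 0
              have "{..Suc m} = insert 0 {0<..Suc m}" by auto
              hence "S = c 0 + d 0" unfolding S_def d_def by simp
              thus ?thesis using S0 dz 0 by simp
            next
              case (Suc j)
              hence "j \<le> m" using i by simp
              thus ?thesis using dsplit[of j] dz Suc by (auto split: if_splits)
            qed
          qed
          thus False using A(2) by blast
        qed
        show ?thesis using Suc.IH dR dnz A(3) A(4) bz by blast
      qed
    qed
  qed
qed



lemma finR: "finite (residues5 d)"
proof -
  have "residues5 d \<subseteq> {xs. set xs \<subseteq> {0..<int d} \<and> length xs = 5}"
    unfolding residues5_def by (auto simp: in_set_conv_nth)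
  thus ?thesis by (rule finite_subset) (rule finite_lists_length_eq, simp)
qed

lemma vecR: assumes "d \<ge> 1" shows "vecmat q d l s \<in> residues5 d"
  using assms unfolding residues5_def vecmat_def by simp

lemma fiber: fixes q :: nat assumes "finite R" "\<forall>l<q. f l \<in> R"
  shows "(\<Sum>t\<in>R. real (card {l. l < q \<and> t = f l}) * g t) = (\<Sum>l<q. g (f l))"
proof -
  have "(\<Sum>l<q. g (f l)) = (\<Sum>t\<in>R. \<Sum>l\<in>{l. l \<in> {..<q} \<and> f l = t}. g (f l))"
    by (rule sum.group[symmetric]) (use assms in auto)
  also have "\<dots> = (\<Sum>t\<in>R. real (card {l. l < q \<and> t = f l}) * g t)"
  proof (rule sum.cong)
    fix t assume "t \<in> R"
    have S: "{l. l \<in> {..<q} \<and> f l = t} = {l. l < q \<and> t = f l}" by auto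
    have "(\<Sum>l\<in>{l. l \<in> {..<q} \<and> f l = t}. g (f l)) = (\<Sum>l\<in>{l. l < q \<and> t = f l}. g t)"
      unfolding S by (rule sum.cong) auto
    also have "\<dots> = real (card {l. l < q \<and> t = f l}) * g t"
      by (rule sum_constant)
    finally show "(\<Sum>l\<in>{l. l \<in> {..<q} \<and> f l = t}. g (f l)) = real (card {l. l < q \<and> t = f l}) * g t" .
  qed simp
  finally show ?thesis ..
qed

theorem theorem2p6:
  fixes q d :: nat
  assumes "q \<ge> 2" and "d \<ge> 2"
    and "\<forall>s\<in>residues5 d. delta_exists q d s"
  shows "(\<forall>s\<in>residues5 d. (\<Sum>t\<in>residues5 d. Pmat q d s t * delta q d t) = delta q d s)
       \<and> (\<forall>s\<in>residues5 d. delta q d s \<in> \<rat>)"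
proof -
  define R where "R = residues5 d"
  define g where "g = (\<lambda>s N. real (gamma N q d s) / real N)"
  define t where "t = (\<lambda>l s. vecmat q d l s)"
  have fR: "finite R" unfolding R_def by (rule finR)
  have tR: "t l s \<in> R" for l s unfolding t_def R_def using assms(2) by (intro vecR) simp
  have conv: "g s \<longlonglongrightarrow> delta q d s" if "s \<in> R" for s
    using assms(3) that unfolding R_def g_def delta_exists_def delta_def
    by (simp add: convergent_LIMSEQ_iff)
  have qpos: "real q > 0" using assms(1) by simp
  have rec: "g s (q*N) = (1 / real q) * (\<Sum>l<q. g (t l s) N)" for s N
  proof -
    have "g s (q*N) = (\<Sum>l<q. real (gamma N q d (t l s))) / (real q * real N)"
      unfolding g_def t_def count[OF assms(1)] by simp
    also have "\<dots> = (1 / real q) * (\<Sum>l<q. g (t l s) N)"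
      unfolding g_def by (simp add: sum_divide_distrib[symmetric])
    finally show ?thesis .
  qed
  have eig: "delta q d s = (1 / real q) * (\<Sum>l<q. delta q d (t l s))" if "s \<in> R" for s
  proof -
    have sm: "strict_mono (\<lambda>N. q * N)" using assms(1) by (intro strict_monoI) simp
    have "(g s \<circ> (\<lambda>N. q * N)) \<longlonglongrightarrow> delta q d s" by (rule LIMSEQ_subseq_LIMSEQ[OF conv[OF that] sm])
    moreover have "(g s \<circ> (\<lambda>N. q * N)) = (\<lambda>N. (1 / real q) * (\<Sum>l<q. g (t l s) N))"
      by (rule ext) (simp add: rec)
    moreover have "(\<lambda>N. (1 / real q) * (\<Sum>l<q. g (t l s) N)) \<longlonglongrightarrow> (1 / real q) * (\<Sum>l<q. delta q d (t l s))"
      by (intro tendsto_intros conv tR)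
    ultimately show ?thesis using LIMSEQ_unique by metis
  qed
  have part1: "(\<Sum>u\<in>R. Pmat q d s u * delta q d u) = delta q d s" if "s \<in> R" for s
  proof -
    have "(\<Sum>u\<in>R. Pmat q d s u * delta q d u) = (1 / real q) * (\<Sum>u\<in>R. real (card {l. l < q \<and> u = t l s}) * delta q d u)"
      unfolding Pmat_def mu_def t_def by (simp add: sum_distrib_left)
    also have "(\<Sum>u\<in>R. real (card {l. l < q \<and> u = t l s}) * delta q d u) = (\<Sum>l<q. delta q d (t l s))"
      by (rule fiber) (use fR tR in auto)
    finally show ?thesis using eig[OF that] by simp
  qed
  define a where "a = (\<lambda>k s. g s (q ^ k))"
  have aR: "a k s \<in> \<rat>" for k s unfolding a_def g_def by simp
  have arec: "a (Suc k) s = (1 / real q) * (\<Sum>l<q. a k (t l s))" for k s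
    unfolding a_def by (simp add: rec)
  have alim: "(\<lambda>k. a k s) \<longlonglongrightarrow> delta q d s" if "s \<in> R" for s
  proof -
    have sm: "strict_mono (\<lambda>k. q ^ k)" using assms(1) by (intro strict_monoI) simp
    have "(g s \<circ> (\<lambda>k. q ^ k)) \<longlonglongrightarrow> delta q d s" by (rule LIMSEQ_subseq_LIMSEQ[OF conv[OF that] sm])
    thus ?thesis unfolding a_def comp_def .
  qed
  define n where "n = card R"
  obtain c where c: "\<forall>i\<in>{..n}. c i \<in> \<rat>" "\<exists>i\<in>{..n}. c i \<noteq> 0" "\<forall>x\<in>R. (\<Sum>i\<in>{..n}. c i * a i x) = 0"
    using dep[OF fR, of "{..n}" a] aR unfolding n_def by auto
  define c' where "c' = (\<lambda>i. if i \<le> n then c i else 0)"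
  have c'R: "\<forall>i. c' i \<in> \<rat>" using c(1) unfolding c'_def by auto
  have c'nz: "\<exists>i\<le>n. c' i \<noteq> 0" using c(2) unfolding c'_def by auto
  have c'eq: "(\<Sum>i\<le>n. c' i * F i) = (\<Sum>i\<le>n. c i * F i)" for F unfolding c'_def by (rule sum.cong) auto
  have recur: "\<forall>x\<in>R. (\<Sum>i\<le>n. c' i * a (k+i) x) = 0" for k
  proof (induction k)
    case 0 thus ?case using c(3) c'eq by simp
  next
    case (Suc k)
    show ?case
    proof
      fix x assume "x \<in> R"
      have "(\<Sum>i\<le>n. c' i * a (Suc k + i) x) = (\<Sum>i\<le>n. c' i * ((1 / real q) * (\<Sum>l<q. a (k+i) (t l x))))"
        by (simp add: arec)
      also have "\<dots> = (1 / real q) * (\<Sum>i\<le>n. \<Sum>l<q. c' i * a (k+i) (t l x))"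
        by (simp add: sum_distrib_left mult_ac)
      also have "\<dots> = (1 / real q) * (\<Sum>l<q. \<Sum>i\<le>n. c' i * a (k+i) (t l x))"
        by (subst sum.swap) (rule refl)
      also have "\<dots> = 0" using Suc.IH tR by simp
      finally show "(\<Sum>i\<le>n. c' i * a (Suc k + i) x) = 0" .
    qed
  qed
  have part2: "delta q d s \<in> \<rat>" if "s \<in> R" for s
  proof -
    have r: "\<forall>k. (\<Sum>i\<le>n. c' i * a (k+i) s) = 0" using recur that by blast
    have aR': "\<forall>k. a k s \<in> \<rat>" using aR by blast
    have L: "(\<forall>i. c' i \<in> \<rat>) \<longrightarrow> (\<exists>i\<le>n. c' i \<noteq> 0) \<longrightarrow> (\<forall>k. a k s \<in> \<rat>)
      \<longrightarrow> (\<lambda>k. a k s) \<longlonglongrightarrow> delta q d s \<longrightarrow> (\<forall>k. (\<Sum>i\<le>n. c' i * a (k+i) s) = 0) \<longrightarrow> delta q d s \<in> \<rat>"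
      by (rule lim_rat[of n, THEN spec[of _ c'], THEN spec[of _ "\<lambda>k. a k s"], THEN spec[of _ "delta q d s"]])
    show ?thesis using L c'R c'nz aR' alim[OF that] r by blast
  qed
  show ?thesis using part1 part2 unfolding R_def by blast
qed

end
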